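(* Let $H_n=\sum_{j=1}^n\frac1j$, let $\gamma$ be the Euler–Mascheroni constant, $\Gamma$ the gamma function and $G$ the Barnes $G$-function. For $x > 0$, $$\sum_{n = 1}^\infty (-1)^n n\left(H_n - \log(n + x - 1) - \gamma + \frac{x}{n} - \frac{3}{2n}\right) = \frac{\gamma }{4} - \frac{x -\log (2) - 1}{2} - 2 \log \left[\frac{G\left(\frac{x+1}{2}\right)}{G\left(\frac{x}{2}\right)}\right] + \log\Gamma \left(\frac{x}{2}\right).$$
   Context: The Barnes $G$-function is the entire function $G(z+1) = (2\pi)^{z/2} e^{-\frac{z+z^2(1+\gamma)}{2}} \prod_{m=1}^\infty \left(1+\frac{z}{m}\right)^m e^{-z+\frac{z^2}{2m}}$; it satisfies $G(1)=1$ and $G(z+1)=\Gamma(z)G(z)$. *)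

theory Defs
  imports "HOL-Analysis.Analysis"
begin

text \<open>Barnes G-function on the reals, via its Weierstrass product:
  G(z+1) = (2 pi)^(z/2) exp(-(z + z^2 (1+gamma))/2) prod_{m>=1} (1+z/m)^m exp(-z + z^2/(2m)).
  We set barnes_G z = G((z-1)+1).\<close>
definition barnes_G :: "real \<Rightarrow> real" where
  "barnes_G z = (let w = z - 1 in
     (2 * pi) powr (w / 2) * exp (- (w + w\<^sup>2 * (1 + euler_mascheroni)) / 2) *
     (\<Prod>m. (1 + w / real (Suc m)) ^ (Suc m) * exp (- w + w\<^sup>2 / (2 * real (Suc m)))))"

end

theory Submission
  imports Defs
begin


definition stir :: "nat \<Rightarrow> real" where
  "stir n = ln (fact n) - (real n + 1/2) * ln (real n) + real n"

lemma stir_step: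
  assumes "n > 0"
  shows "stir n - stir (Suc n) = (real n + 1/2) * (ln (real n + 1) - ln (real n)) - 1"
proof -
  have "ln (fact (Suc n) :: real) = ln (real n + 1) + ln (fact n)"
    by (simp add: ln_mult add.commute)
  then show ?thesis unfolding stir_def by (simp add: algebra_simps)
qed

lemma stir_step_bounds:
  assumes "n > 0"
  shows "stir n - stir (Suc n) \<ge> 0" "stir n - stir (Suc n) \<le> 1/(4*real n) - 1/(4*real (Suc n))"
proof -
  have n: "real n > 0" using assms by simp
  have "ln (real n + 1) - ln (real n) \<ge> 2 * ((real n + 1) - real n) / (real n + (real n + 1))"
    by (rule ln_inverse_approx_ge) (use n in auto)
  hence "ln (real n + 1) - ln (real n) \<ge> 2 / (2 * real n + 1)" by (simp add: algebra_simps)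
  hence "(real n + 1/2) * (ln (real n + 1) - ln (real n)) \<ge> (real n + 1/2) * (2 / (2 * real n + 1))"
    by (intro mult_left_mono) (use n in auto)
  moreover have "(real n + 1/2) * (2 / (2 * real n + 1)) = 1" using n by (simp add: field_simps)
  ultimately show "stir n - stir (Suc n) \<ge> 0" using stir_step[OF assms] by linarith
  have "ln (real n + 1) - ln (real n) \<le> 1 * (inverse (real n) + inverse (real n + 1)) / 2"
    by (rule ln_inverse_approx_le) (use n in auto)
  hence "(real n + 1/2) * (ln (real n + 1) - ln (real n)) \<le> (real n + 1/2) * ((inverse (real n) + inverse (real n + 1)) / 2)"
    by (intro mult_left_mono) (use n in auto)
  moreover have "(real n + 1/2) * ((inverse (real n) + inverse (real n + 1)) / 2) - 1 = 1/(4*real n) - 1/(4*real (Suc n))"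
  proof -
    have p: "real n * 4 + real n * (real n * 4) \<noteq> 0" using n
      by (metis add_pos_pos mult_pos_pos zero_less_numeral less_irrefl)
    show ?thesis using n p by (simp add: field_simps)
  qed
  ultimately show "stir n - stir (Suc n) \<le> 1/(4*real n) - 1/(4*real (Suc n))" using stir_step[OF assms] by linarith
qed

lemma stir_convergent: "\<exists>C. (\<lambda>n. stir (Suc n)) \<longlonglongrightarrow> C"
proof -
  have dec: "decseq (\<lambda>n. stir (Suc n))"
    by (rule decseq_SucI) (use stir_step_bounds(1) in force)
  have inc: "stir (Suc n) - 1/(4*real (Suc n)) \<ge> stir 1 - 1/4" for n
  proof (induction n)
    case 0 then show ?case by simp
  next
    case (Suc n)
    have "stir (Suc n) - stir (Suc (Suc n)) \<le> 1/(4*real (Suc n)) - 1/(4*real (Suc (Suc n)))"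
      by (rule stir_step_bounds(2)) simp
    with Suc show ?case by linarith
  qed
  have "stir (Suc n) \<ge> stir 1 - 1/4" for n
  proof -
    have "1/(4*real (Suc n)) \<ge> 0" by simp
    with inc[of n] show ?thesis by linarith
  qed
  then obtain L where "(\<lambda>n. stir (Suc n)) \<longlonglongrightarrow> L"
    using decseq_convergent[OF dec, of "stir 1 - 1/4"] by blast
  then show ?thesis by blast
qed



lemma wallis_aux:
  fixes F G r a :: real
  assumes "G > 0" "r \<ge> 0"
  shows "a * F^4/(G^2*(2*r+1)) * (4*(r+1)^2/((2*r+1)*(2*r+3))) = 16*a*((r+1)*F)^4/(((2*r+2)*(2*r+1)*G)^2*(2*r+3))"
proof -
  have "2*r+1 > 0" "2*r+3 > 0" using assms by auto
  then show ?thesis using assms by (simp add: divide_simps) algebra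
qed

lemma wallis_prod_eq:
  "(\<Prod>k=1..n. (4*real k^2) / (4*real k^2 - 1)) = 16^n * (fact n)^4 / ((fact (2*n))^2 * (2*real n+1))"
proof (induction n)
  case 0 then show ?case by simp
next
  case (Suc n)
  have f2: "(fact (2 * Suc n) :: real) = (2*real n + 2) * (2*real n+1) * fact (2*n)"
    by (simp add: algebra_simps)
  have pos: "(fact (2*n) :: real) > 0" "2*real n + 1 > 0" "2 * real n + 3 > 0" by auto
  have "(\<Prod>k=1..Suc n. (4*real k^2) / (4*real k^2 - 1)) =
        (\<Prod>k=1..n. (4*real k^2) / (4*real k^2 - 1)) * ((4*real (Suc n)^2) / (4*real (Suc n)^2 - 1))"
    by simp
  also have "\<dots> = 16^n * (fact n)^4 / ((fact (2*n))^2 * (2*real n+1)) * ((4*(real n+1)^2) / ((2*real n+1)*(2*real n+3)))"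
  proof -
    have "4*real (Suc n)^2 - 1 = (2*real n+1)*(2*real n+3)" "4*real (Suc n)^2 = 4*(real n+1)^2"
      by (simp_all add: algebra_simps power2_eq_square)
    then show ?thesis by (simp only: Suc.IH)
  qed
  also have "\<dots> = 16^Suc n * (fact (Suc n))^4 / ((fact (2*Suc n))^2 * (2*real (Suc n)+1))"
    unfolding f2 using wallis_aux[OF pos(1), of "real n" "16^n" "fact n"]
    by (simp add: algebra_simps)
  finally show ?case .
qed

lemma stir_limit: "(\<lambda>n. stir n) \<longlonglongrightarrow> ln (2*pi) / 2"
proof -
  obtain C where C: "(\<lambda>n. stir (Suc n)) \<longlonglongrightarrow> C" using stir_convergent by blast
  hence C0: "stir \<longlonglongrightarrow> C" by (rule LIMSEQ_imp_Suc)
  have C2: "(\<lambda>n. stir (2*n)) \<longlonglongrightarrow> C"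
    using LIMSEQ_subseq_LIMSEQ[OF C0, of "\<lambda>n. 2*n"] by (simp add: strict_mono_def o_def)
  define W where "W n = (\<Prod>k=1..n. (4*real k^2) / (4*real k^2 - 1))" for n
  have W: "W \<longlonglongrightarrow> pi/2" unfolding W_def by (rule wallis)
  have lnW: "(\<lambda>n. ln (W n)) \<longlonglongrightarrow> ln (pi/2)"
    by (rule tendsto_ln[OF W]) (use pi_gt_zero in simp)
  have l2: "(\<lambda>n. ln (2 + 1 / real n)) \<longlonglongrightarrow> ln (2 + 0)"
    by (intro tendsto_intros LIMSEQ_inverse_real_of_nat[unfolded inverse_eq_divide]) simp
  have key: "4 * stir n - 2 * stir (2*n) = ln (W n) + ln 2 + ln (2 + 1 / real n)" if n: "n > 0" for n
  proof -
    have rn: "real n > 0" using n by simp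
    have "W n = 16^n * (fact n)^4 / ((fact (2*n))^2 * (2*real n+1))" unfolding W_def by (rule wallis_prod_eq)
    hence "ln (W n) = ln (16^n) + 4 * ln (fact n) - 2 * ln (fact (2*n)) - ln (2*real n+1)"
      using rn by (simp add: ln_mult ln_div ln_realpow)
    moreover have "ln (16^n :: real) = 4 * real n * ln 2"
    proof -
      have "(16::real) = 2^4" by simp
      hence "ln (16^n :: real) = ln (2^(4*n))" by (simp add: power_mult)
      thus ?thesis by (simp add: ln_realpow)
    qed
    moreover have "ln (2 + 1 / real n) = ln (2*real n+1) - ln (real n)"
    proof -
      have "2 + 1 / real n = (2*real n+1)/real n" using rn by (simp add: field_simps)
      thus ?thesis using rn by (simp add: ln_div)
    qed
    moreover have "ln (real (2*n)) = ln 2 + ln (real n)" using rn by (simp add: ln_mult)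
    ultimately show ?thesis unfolding stir_def by (simp add: algebra_simps)
  qed
  have "(\<lambda>n. 4 * stir n - 2 * stir (2*n)) \<longlonglongrightarrow> 4 * C - 2 * C"
    by (intro tendsto_intros C0 C2)
  moreover have "(\<lambda>n. 4 * stir n - 2 * stir (2*n)) \<longlonglongrightarrow> ln (pi/2) + ln 2 + ln (2 + 0)"
  proof (rule Lim_transform_eventually)
    show "(\<lambda>n. ln (W n) + ln 2 + ln (2 + 1 / real n)) \<longlonglongrightarrow> ln (pi/2) + ln 2 + ln (2 + 0)"
      by (intro tendsto_intros lnW l2)
    show "\<forall>\<^sub>F n in sequentially. ln (W n) + ln 2 + ln (2 + 1 / real n) = 4 * stir n - 2 * stir (2*n)"
      using eventually_gt_at_top[of "0::nat"] by eventually_elim (simp add: key)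
  qed
  ultimately have "4 * C - 2 * C = ln (pi/2) + ln 2 + ln (2 + 0)" by (rule LIMSEQ_unique)
  moreover have "ln (pi/2) + ln 2 + ln (2 + 0) = ln (2*pi)"
    using pi_gt_zero by (simp add: ln_div ln_mult)
  ultimately have "C = ln (2*pi) / 2" by simp
  with C0 show ?thesis by simp
qed



lemma harm_asymp: "(\<lambda>n. real n * (harm n - ln (real n) - euler_mascheroni)) \<longlonglongrightarrow> 1/2"
proof (rule LIMSEQ_offset[where k=2])
  have lo: "real (k+2) * (harm (k+2) - ln (real (k+2)) - euler_mascheroni) \<ge> 1 - real (k+2) / (2 * real (k+1))" for k
  proof -
    have "harm (k+2) = harm (Suc k) + 1 / real (k+2)" by (simp add: harm_Suc inverse_eq_divide)
    hence "harm (k+2) - ln (real (k+2)) - euler_mascheroni \<ge> 1/real (k+2) - 1/real (2*(k+1))"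
      using euler_mascheroni_upper[of k] by simp
    hence "real (k+2) * (harm (k+2) - ln (real (k+2)) - euler_mascheroni) \<ge> real (k+2) * (1/real (k+2) - 1/real (2*(k+1)))"
      by (intro mult_left_mono) auto
    also have "real (k+2) * (1/real (k+2) - 1/real (2*(k+1))) = 1 - real (k+2) / (2 * real (k+1))"
    proof -
      have p: "real k + 1 > 0" "real k + 2 > 0" by auto
      have e: "real (k+2) = real k + 2" "real (2*(k+1)) = 2*(real k+1)" "real (k+1) = real k + 1" by auto
      have "(r+2) * (1/(r+2) - 1/(2*(r+1))) = 1 - (r+2)/(2*(r+1))" if "r \<ge> 0" for r :: real
      proof -
        have "r + 2 \<noteq> 0" "r + 1 \<noteq> 0" using that by auto
        thus ?thesis by (simp add: right_diff_distrib)
      qed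
      then show ?thesis unfolding e by simp
    qed
    finally show ?thesis .
  qed
  have up: "real (k+2) * (harm (k+2) - ln (real (k+2)) - euler_mascheroni) \<le> 1/2" for k
  proof -
    have "harm (k+2) = harm (Suc k) + 1 / real (k+2)" by (simp add: harm_Suc inverse_eq_divide)
    hence "harm (k+2) - ln (real (k+2)) - euler_mascheroni \<le> 1/real (k+2) - 1/real (2*(k+2))"
      using euler_mascheroni_lower[of k] by simp
    hence "real (k+2) * (harm (k+2) - ln (real (k+2)) - euler_mascheroni) \<le> real (k+2) * (1/real (k+2) - 1/real (2*(k+2)))"
      by (intro mult_left_mono) auto
    also have "real (k+2) * (1/real (k+2) - 1/real (2*(k+2))) = 1/2"
    proof -
      have e: "real (k+2) = real k + 2" "real (2*(k+2)) = 2*(real k+2)" by auto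
      have "(r+2) * (1/(r+2) - 1/(2*(r+2))) = 1/2" if "r \<ge> 0" for r :: real
      proof -
        have "r + 2 \<noteq> 0" using that by auto
        thus ?thesis by (simp add: field_simps)
      qed
      then show ?thesis unfolding e by simp
    qed
    finally show ?thesis .
  qed
  have lim: "(\<lambda>k. 1 - real (k+2) / (2 * real (k+1))) \<longlonglongrightarrow> 1 - 1/2"
  proof -
    have e: "real (k+2) / (2 * real (k+1)) = (1/2) * (real (Suc (Suc k)) / real (Suc k))" for k
      by (simp add: field_simps)
    have "(\<lambda>k. real (Suc (Suc k)) / real (Suc k)) \<longlonglongrightarrow> 1"
      using LIMSEQ_Suc[OF LIMSEQ_Suc_n_over_n] by simp
    hence "(\<lambda>k. (1/2) * (real (Suc (Suc k)) / real (Suc k))) \<longlonglongrightarrow> (1/2) * 1"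
      by (intro tendsto_intros)
    hence "(\<lambda>k. 1 - (1/2) * (real (Suc (Suc k)) / real (Suc k))) \<longlonglongrightarrow> 1 - (1/2) * 1"
      by (rule tendsto_diff[OF tendsto_const])
    thus ?thesis unfolding e by simp
  qed
  show "(\<lambda>k. real (k+2) * (harm (k+2) - ln (real (k+2)) - euler_mascheroni)) \<longlonglongrightarrow> 1/2"
    by (rule tendsto_sandwich[OF always_eventually always_eventually lim[simplified] tendsto_const])
       (use lo up in auto)
qed

lemma harm_asymp2: "(\<lambda>n. real n * (harm (2*n) - ln (real (2*n)) - euler_mascheroni)) \<longlonglongrightarrow> 1/4"
proof -
  have "(\<lambda>n. real (2*n) * (harm (2*n) - ln (real (2*n)) - euler_mascheroni)) \<longlonglongrightarrow> 1/2"
    using LIMSEQ_subseq_LIMSEQ[OF harm_asymp, of "\<lambda>n. 2*n"] by (simp add: strict_mono_def o_def)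
  hence "(\<lambda>n. (1/2) * (real (2*n) * (harm (2*n) - ln (real (2*n)) - euler_mascheroni))) \<longlonglongrightarrow> (1/2) * (1/2)"
    by (intro tendsto_intros)
  thus ?thesis by simp
qed

lemma harm_double: "(\<lambda>n. harm (2*n) - harm n) \<longlonglongrightarrow> (ln 2 :: real)"
proof (rule Lim_transform_eventually)
  have a: "(\<lambda>n. harm (2*n) - ln (real (2*n))) \<longlonglongrightarrow> (euler_mascheroni::real)"
    using LIMSEQ_subseq_LIMSEQ[OF euler_mascheroni_LIMSEQ, of "\<lambda>n. 2*n"] by (simp add: strict_mono_def o_def)
  show "(\<lambda>n. (harm (2*n) - ln (real (2*n))) - (harm n - ln (real n)) + ln 2) \<longlonglongrightarrow> (ln 2 :: real)"
    using tendsto_add[OF tendsto_diff[OF a euler_mascheroni_LIMSEQ] tendsto_const[of "ln 2"]] by simp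
  show "\<forall>\<^sub>F n in sequentially. (harm (2*n) - ln (real (2*n))) - (harm n - ln (real n)) + ln 2 = harm (2*n) - (harm n :: real)"
    using eventually_gt_at_top[of "0::nat"] by eventually_elim (simp add: ln_mult)
qed



lemma hderiv: "s > -1 \<Longrightarrow> ((\<lambda>s. ln (1 + s) - s + s^2/2) has_real_derivative (s^2/(1+s))) (at s)"
  for s :: real
proof -
  assume s: "s > -1"
  have "((\<lambda>s. ln (1 + s) - s + s^2/2) has_real_derivative (1/(1+s) - 1 + s)) (at s)"
    using s by (auto intro!: derivative_eq_intros)
  moreover have "1/(1+s) - 1 + s = s^2/(1+s)" using s by (simp add: field_simps power2_eq_square)
  ultimately show ?thesis by simp
qed

lemma cubic_bound:
  fixes t :: real
  assumes "t \<ge> -1/2"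
  shows "\<bar>ln (1 + t) - t + t^2/2\<bar> \<le> \<bar>t\<bar>^3"
proof (cases "t \<ge> 0")
  case True
  have a: "ln (1 + 0) - 0 + 0^2/2 \<le> ln (1 + t) - t + t^2/2"
  proof (rule DERIV_nonneg_imp_nondecreasing[OF True])
    fix s :: real assume "0 \<le> s" "s \<le> t"
    then show "\<exists>y. ((\<lambda>s. ln (1 + s) - s + s^2/2) has_real_derivative y) (at s) \<and> y \<ge> 0"
      by (intro exI[of _ "s^2/(1+s)"]) (auto intro!: hderiv)
  qed
  have b: "0^3 - (ln (1 + 0) - 0 + 0^2/2) \<le> t^3 - (ln (1 + t) - t + t^2/2)"
  proof (rule DERIV_nonneg_imp_nondecreasing[OF True])
    fix s :: real assume s: "0 \<le> s" "s \<le> t"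
    have d1: "((\<lambda>s. s^3) has_real_derivative (3 * s^2)) (at s)"
      using DERIV_pow[of 3 s] by simp
    have d: "((\<lambda>s. s^3 - (ln (1 + s) - s + s^2/2)) has_real_derivative (3 * s^2 - s^2/(1+s))) (at s)"
      using DERIV_diff[OF d1 hderiv[of s]] s by simp
    have "s^2/(1+s) \<le> s^2" using s by (simp add: divide_le_eq mult_le_cancel_left1)
    moreover have "s^2 \<le> 3 * s^2" by simp
    ultimately have "3 * s^2 - s^2/(1+s) \<ge> 0" by linarith
    with d show "\<exists>y. ((\<lambda>s. s^3 - (ln (1 + s) - s + s^2/2)) has_real_derivative y) (at s) \<and> y \<ge> 0"
      by blast
  qed
  show ?thesis using a b True by simp
next
  case False
  hence t0: "t \<le> 0" by simp
  have a: "ln (1 + t) - t + t^2/2 \<le> ln (1 + 0) - 0 + 0^2/2"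
  proof (rule DERIV_nonneg_imp_nondecreasing[OF t0])
    fix s :: real assume "t \<le> s" "s \<le> 0"
    then show "\<exists>y. ((\<lambda>s. ln (1 + s) - s + s^2/2) has_real_derivative y) (at s) \<and> y \<ge> 0"
      using assms by (intro exI[of _ "s^2/(1+s)"]) (auto intro!: hderiv)
  qed
  have b: "(ln (1 + 0) - 0 + 0^2/2) - 0^3 \<le> (ln (1 + t) - t + t^2/2) - t^3"
  proof (rule DERIV_nonpos_imp_nonincreasing[OF t0])
    fix s :: real assume s: "t \<le> s" "s \<le> 0"
    have s1: "1 + s \<ge> 1/2" using s assms by simp
    have d1: "((\<lambda>s. s^3) has_real_derivative (3 * s^2)) (at s)"
      using DERIV_pow[of 3 s] by simp
    have d: "((\<lambda>s. (ln (1 + s) - s + s^2/2) - s^3) has_real_derivative (s^2/(1+s) - 3 * s^2)) (at s)"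
      using DERIV_diff[OF hderiv[of s] d1] s assms by simp
    have "s^2/(1+s) \<le> 2 * s^2"
    proof -
      have "s^2 * 1 \<le> s^2 * (2 * (1+s))" using s1 by (intro mult_left_mono) auto
      hence "s^2 \<le> 2 * s^2 * (1+s)" by (simp add: algebra_simps)
      thus ?thesis using s1 by (simp add: divide_le_eq)
    qed
    moreover have "0 \<le> s^2" by simp
    ultimately have "s^2/(1+s) - 3 * s^2 \<le> 0" by linarith
    with d show "\<exists>y. ((\<lambda>s. (ln (1 + s) - s + s^2/2) - s^3) has_real_derivative y) (at s) \<and> y \<le> 0"
      by blast
  qed
  have "\<bar>t\<bar>^3 = - (t^3)" using t0 by (simp add: abs_if)
  then show ?thesis using a b by simp
qed

definition lam :: "real \<Rightarrow> nat \<Rightarrow> real" where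
  "lam w k = real (Suc k) * ln (1 + w / real (Suc k)) - w + w^2 / (2 * real (Suc k))"

lemma lam_bound:
  assumes "real (Suc k) \<ge> 2 * \<bar>w\<bar>"
  shows "\<bar>lam w k\<bar> \<le> \<bar>w\<bar>^3 / real (Suc k)^2"
proof -
  define n where "n = real (Suc k)"
  have n: "n > 0" unfolding n_def by simp
  define t where "t = w / n"
  have t: "\<bar>t\<bar> \<le> 1/2" using assms n unfolding t_def n_def[symmetric] by (simp add: abs_div field_simps)
  hence "t \<ge> -1/2" by simp
  have "lam w k = n * (ln (1 + t) - t + t^2/2)"
    unfolding lam_def n_def[symmetric] t_def using n by (simp add: field_simps power2_eq_square)
  hence "\<bar>lam w k\<bar> = n * \<bar>ln (1 + t) - t + t^2/2\<bar>" using n by (simp add: abs_mult)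
  also have "\<dots> \<le> n * \<bar>t\<bar>^3" using cubic_bound[OF \<open>t \<ge> -1/2\<close>] n by (intro mult_left_mono) auto
  also have "\<dots> = \<bar>w\<bar>^3 / n^2" unfolding t_def using n by (simp add: abs_div power_divide field_simps power2_eq_square power3_eq_cube)
  finally show ?thesis unfolding n_def .
qed

lemma lam_summable: "summable (lam w)"
proof (rule summable_comparison_test_ev)
  have "summable (\<lambda>k. 1 / (real k + 1)^2)" using inverse_squares_sums by (auto simp: sums_iff add.commute)
  hence "summable (\<lambda>k. \<bar>w\<bar>^3 * (1 / (real k + 1)^2))" by (rule summable_mult)
  thus "summable (\<lambda>k. \<bar>w\<bar>^3 / real (Suc k)^2)" by (simp add: add.commute)
  obtain N :: nat where N: "real N \<ge> 2 * \<bar>w\<bar>" using real_arch_simple by blast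
  show "\<forall>\<^sub>F k in sequentially. norm (lam w k) \<le> \<bar>w\<bar>^3 / real (Suc k)^2"
    using eventually_ge_at_top[of N]
  proof eventually_elim
    case (elim k)
    hence "real (Suc k) \<ge> 2 * \<bar>w\<bar>" using N by linarith
    thus ?case using lam_bound by simp
  qed
qed

lemma barnes_G_ln:
  assumes "z > 0"
  shows "barnes_G z > 0"
    "ln (barnes_G z) = (z - 1) / 2 * ln (2*pi) - ((z - 1) + (z - 1)^2 * (1 + euler_mascheroni)) / 2 + suminf (lam (z - 1))"
proof -
  define w where "w = z - 1"
  have w: "w > -1" using assms unfolding w_def by simp
  have fac: "(1 + w / real (Suc m)) ^ (Suc m) * exp (- w + w^2 / (2 * real (Suc m))) = exp (lam w m)" for m
  proof -
    have pos: "1 + w / real (Suc m) > 0"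
    proof -
      have "w / real (Suc m) > -1" using w by (simp add: field_simps)
      thus ?thesis by simp
    qed
    have "(1 + w / real (Suc m)) ^ (Suc m) = exp (real (Suc m) * ln (1 + w / real (Suc m)))"
      using pos exp_of_nat_mult[of "Suc m" "ln (1 + w / real (Suc m))"] by simp
    moreover have "exp (lam w m) = exp (real (Suc m) * ln (1 + w / real (Suc m))) * exp (- w + w^2 / (2 * real (Suc m)))"
      unfolding lam_def by (subst exp_add[symmetric]) (simp add: algebra_simps)
    ultimately show ?thesis by simp
  qed
  have P: "(\<Prod>m. (1 + w / real (Suc m)) ^ (Suc m) * exp (- w + w^2 / (2 * real (Suc m)))) = exp (suminf (lam w))"
    unfolding fac by (rule prodinf_exp[OF lam_summable])
  have G: "barnes_G z = (2 * pi) powr (w / 2) * exp (- (w + w\<^sup>2 * (1 + euler_mascheroni)) / 2) * exp (suminf (lam w))"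
    unfolding barnes_G_def Let_def w_def[symmetric] P ..
  show "barnes_G z > 0" unfolding G by simp
  show "ln (barnes_G z) = (z - 1) / 2 * ln (2*pi) - ((z - 1) + (z - 1)^2 * (1 + euler_mascheroni)) / 2 + suminf (lam (z - 1))"
    unfolding G w_def[symmetric] by (simp add: ln_mult ln_powr) (simp add: field_simps)
qed



lemma my_sequentially_even_odd:
  assumes E: "eventually (\<lambda>n. P (2 * n)) sequentially" and O: "eventually (\<lambda>n. P (2 * n + 1)) sequentially"
  shows "eventually P sequentially"
proof -
  from E obtain n_e where [intro]: "\<And>n. n \<ge> n_e \<Longrightarrow> P (2 * n)"
    by (auto simp: eventually_sequentially)
  moreover
  from O obtain n_o where [intro]: "\<And>n. n \<ge> n_o \<Longrightarrow> P (Suc (2 * n))"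
    by (auto simp: eventually_sequentially)
  show ?thesis
    unfolding eventually_sequentially
  proof (intro exI allI impI)
    fix n assume "max (2 * n_e) (2 * n_o + 1) \<le> n" then show "P n"
      by (cases "even n") (auto elim!: evenE oddE )
  qed
qed

lemma my_limseq_even_odd:
  assumes "(\<lambda>n. f (2 * n)) \<longlonglongrightarrow> (l :: 'a :: topological_space)"
      and "(\<lambda>n. f (2 * n + 1)) \<longlonglongrightarrow> l"
  shows "f \<longlonglongrightarrow> l"
  using assms by (auto simp: filterlim_iff intro: my_sequentially_even_odd)

lemma sums_from_even:
  fixes f :: "nat \<Rightarrow> real"
  assumes "(\<lambda>N. sum f {..<2*N}) \<longlonglongrightarrow> s" "f \<longlonglongrightarrow> 0"
  shows "f sums s"
  unfolding sums_def
proof (rule my_limseq_even_odd)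
  show "(\<lambda>n. sum f {..<2*n}) \<longlonglongrightarrow> s" by (rule assms(1))
  have "(\<lambda>n. f (2*n)) \<longlonglongrightarrow> 0"
    using LIMSEQ_subseq_LIMSEQ[OF assms(2), of "\<lambda>n. 2*n"] by (simp add: strict_mono_def o_def)
  hence "(\<lambda>n. sum f {..<2*n} + f (2*n)) \<longlonglongrightarrow> s + 0" by (intro tendsto_add assms(1))
  thus "(\<lambda>n. sum f {..<2*n+1}) \<longlonglongrightarrow> s" by simp
qed

lemma n_ln_limit: "(\<lambda>n. real n * ln (1 + a / real n)) \<longlonglongrightarrow> a"
proof -
  obtain N :: nat where N: "real N \<ge> 2 * \<bar>a\<bar> + 1" using real_arch_simple by blast
  have b: "\<bar>real n * ln (1 + a / real n) - a\<bar> \<le> 2 * a^2 * (1 / real n)" if "n \<ge> N" for n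
  proof -
    have n: "real n \<ge> 2 * \<bar>a\<bar> + 1" using that N by linarith
    hence np: "real n > 0" using abs_ge_zero[of a] by linarith
    have t: "\<bar>a / real n\<bar> \<le> 1/2" using n np by (simp add: abs_div field_simps)
    have "\<bar>real n * ln (1 + a / real n) - a\<bar> = real n * \<bar>ln (1 + a / real n) - a / real n\<bar>"
    proof -
      have "real n * ln (1 + a / real n) - a = real n * (ln (1 + a / real n) - a / real n)"
        using np by (simp add: right_diff_distrib)
      thus ?thesis using np by (simp add: abs_mult)
    qed
    also have "\<dots> \<le> real n * (2 * (a / real n)^2)"
      using abs_ln_one_plus_x_minus_x_bound[OF t] np by (intro mult_left_mono) auto
    also have "\<dots> = 2 * a^2 * (1 / real n)" using np by (simp add: field_simps power2_eq_square)
    finally show ?thesis .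
  qed
  have z0: "(\<lambda>n. 2 * a^2 * (1 / real n)) \<longlonglongrightarrow> 2 * a^2 * 0"
    by (intro tendsto_intros LIMSEQ_inverse_real_of_nat[unfolded inverse_eq_divide])
  have z: "(\<lambda>n. 2 * a^2 * (1 / real n)) \<longlonglongrightarrow> 0" using z0 by simp
  have "(\<lambda>n. real n * ln (1 + a / real n) - a) \<longlonglongrightarrow> 0"
  proof (rule tendsto_rabs_zero_cancel)
    show "(\<lambda>n. \<bar>real n * ln (1 + a / real n) - a\<bar>) \<longlonglongrightarrow> 0"
    proof (rule tendsto_sandwich[OF _ _ tendsto_const z])
      show "\<forall>\<^sub>F n in sequentially. 0 \<le> \<bar>real n * ln (1 + a / real n) - a\<bar>" by simp
      show "\<forall>\<^sub>F n in sequentially. \<bar>real n * ln (1 + a / real n) - a\<bar> \<le> 2 * a\<^sup>2 * (1 / real n)"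
        using eventually_ge_at_top[of N] by eventually_elim (rule b)
    qed
  qed
  thus ?thesis by (simp add: LIM_zero_iff)
qed



definition gt :: "real \<Rightarrow> nat \<Rightarrow> real" where
  "gt x n = (-1) ^ n * real n *
            (harm n - ln (real n + x - 1) - euler_mascheroni + x / real n - 3 / (2 * real n))"

lemma pair_alg:
  fixes r x H A B C g :: real
  assumes r: "r \<ge> 0"
  shows "- ((2*r+1) * (H - B - g + x/(2*r+1) - 3/(2*(2*r+1))))
         + (2*r+2) * (H + 1/(2*r+2) - A - g + x/(2*r+2) - 3/(2*(2*r+2)))
       = H - g - B + (x - 3/2)/(2*(r+1))
         - 2 * (((r+1) * (A - C) - ((x+1)/2 - 1) + ((x+1)/2 - 1)^2/(2*(r+1)))
              - ((r+1) * (B - C) - (x/2 - 1) + (x/2 - 1)^2/(2*(r+1))))"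
proof -
  have n: "2*r+1 \<noteq> 0" "2*r+2 \<noteq> 0" "r + 1 \<noteq> 0" using r by auto
  have a: "(2*r+1)*(x/(2*r+1)) = x" "(2*r+1)*(3/(2*(2*r+1))) = 3/2"
     "(2*r+2)*(x/(2*r+2)) = x" "(2*r+2)*(3/(2*(2*r+2))) = 3/2" "(2*r+2)*(1/(2*r+2)) = 1"
  proof -
    have m: "2*(2*r+1) \<noteq> 0" "2*(2*r+2) \<noteq> 0" using r by auto
    show "(2*r+1)*(x/(2*r+1)) = x" "(2*r+2)*(x/(2*r+2)) = x" "(2*r+2)*(1/(2*r+2)) = 1" using n by simp_all
    show "(2*r+1)*(3/(2*(2*r+1))) = 3/2" using m n by (simp add: divide_simps)
    show "(2*r+2)*(3/(2*(2*r+2))) = 3/2" using m n by (simp add: divide_simps)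
  qed
  have l1: "(2*r+1) * (H - B - g + x/(2*r+1) - 3/(2*(2*r+1))) = (2*r+1) * (H - B - g) + x - 3/2"
    by (simp only: right_diff_distrib[of "2*r+1"] distrib_left[of "2*r+1"] a)
  have l2: "(2*r+2) * (H + 1/(2*r+2) - A - g + x/(2*r+2) - 3/(2*(2*r+2))) = (2*r+2) * (H - A - g) + 1 + x - 3/2"
    by (simp only: right_diff_distrib[of "2*r+2"] distrib_left[of "2*r+2"] a)
  have q: "((x+1)/2 - 1)^2/(2*(r+1)) - (x/2 - 1)^2/(2*(r+1)) = (x - 3/2)/(4*(r+1))"
  proof -
    have e: "((x+1)/2 - 1)^2 - (x/2 - 1)^2 = (x - 3/2)/2" by (simp add: power2_eq_square field_simps)
    have "((x+1)/2 - 1)^2/(2*(r+1)) - (x/2 - 1)^2/(2*(r+1)) = (((x+1)/2 - 1)^2 - (x/2 - 1)^2)/(2*(r+1))"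
      by (rule diff_divide_distrib[symmetric])
    also have "\<dots> = ((x - 3/2)/2)/(2*(r+1))" unfolding e ..
    also have "\<dots> = (x - 3/2)/(4*(r+1))" by simp
    finally show ?thesis .
  qed
  have q2: "(x - 3/2)/(2*(r+1)) = 2 * ((x - 3/2)/(4*(r+1)))" using n by (simp add: field_simps)
  have "- ((2*r+1) * (H - B - g + x/(2*r+1) - 3/(2*(2*r+1))))
         + (2*r+2) * (H + 1/(2*r+2) - A - g + x/(2*r+2) - 3/(2*(2*r+2)))
       = H - g - B - 2*(r+1)*(A - B) + 1"
    unfolding l1 l2 by (simp add: algebra_simps)
  also have "\<dots> = H - g - B + (x - 3/2)/(2*(r+1))
         - 2 * (((r+1) * (A - C) - ((x+1)/2 - 1) + ((x+1)/2 - 1)^2/(2*(r+1)))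
              - ((r+1) * (B - C) - (x/2 - 1) + (x/2 - 1)^2/(2*(r+1))))"
  proof -
    have "((r+1) * (A - C) - ((x+1)/2 - 1) + ((x+1)/2 - 1)^2/(2*(r+1)))
              - ((r+1) * (B - C) - (x/2 - 1) + (x/2 - 1)^2/(2*(r+1)))
          = (r+1)*(A - B) - 1/2 + (((x+1)/2 - 1)^2/(2*(r+1)) - (x/2 - 1)^2/(2*(r+1)))"
      by (simp add: algebra_simps) (simp add: field_simps)
    also have "\<dots> = (r+1)*(A - B) - 1/2 + (x - 3/2)/(4*(r+1))" unfolding q ..
    finally show ?thesis unfolding q2 by (simp add: algebra_simps)
  qed
  finally show ?thesis .
qed

lemma pair_eq:
  assumes x: "x > 0"
  shows "gt x (2*m+1) + gt x (2*m+2) = harm (2*m+1) - euler_mascheroni - ln (2*real m + x)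
           + (x - 3/2)/(2*(real m+1)) - 2 * (lam ((x+1)/2 - 1) m - lam (x/2 - 1) m)"
proof -
  define r where "r = real m"
  have r: "r \<ge> 0" unfolding r_def by simp
  define A where "A = ln (2*r+x+1)"
  define B where "B = ln (2*r+x)"
  define C where "C = ln (2*r+2)"
  define H :: real where "H = harm (2*m+1)"
  have g1: "gt x (2*m+1) = - ((2*r+1) * (H - B - euler_mascheroni + x/(2*r+1) - 3/(2*(2*r+1))))"
  proof -
    have e: "real (2*m+1) + x - 1 = 2*r+x" "real (2*m+1) = 2*r+1" "2*r+1+x-1 = 2*r+x" "(-1::real)^(2*m+1) = -1"
      unfolding r_def by simp_all
    show ?thesis unfolding gt_def H_def B_def by (simp only: e mult_minus1 mult_minus_left mult_1_left)
  qed
  have g2: "gt x (2*m+2) = (2*r+2) * (H + 1/(2*r+2) - A - euler_mascheroni + x/(2*r+2) - 3/(2*(2*r+2)))"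
  proof -
    have e: "real (2*m+2) + x - 1 = 2*r+x+1" "real (2*m+2) = 2*r+2" "2*r+2+x-1 = 2*r+x+1" "(-1::real)^(2*m+2) = 1"
      unfolding r_def by simp_all
    moreover have h: "harm (2*m+2) = H + 1/(2*r+2)"
    proof -
      have "harm (Suc (2*m+1)) = harm (2*m+1) + inverse (real (Suc (2*m+1)))" by (rule harm_Suc)
      moreover have "real (Suc (2*m+1)) = 2*r+2" unfolding r_def by simp
      ultimately show ?thesis unfolding H_def by (simp add: inverse_eq_divide)
    qed
    show ?thesis unfolding gt_def A_def by (simp only: e h mult_1_left)
  qed
  have rs: "real (Suc m) = r + 1" unfolding r_def by simp
  have l2: "lam ((x+1)/2 - 1) m = (r+1) * (A - C) - ((x+1)/2 - 1) + ((x+1)/2 - 1)^2/(2*(r+1))"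
  proof -
    have "1 + ((x+1)/2 - 1) / (r+1) = (2*r+x+1)/(2*r+2)" using r by (simp add: field_simps)
    hence "ln (1 + ((x+1)/2 - 1) / (r+1)) = A - C" unfolding A_def C_def using r x by (simp add: ln_div)
    thus ?thesis unfolding lam_def rs by simp
  qed
  have l1: "lam (x/2 - 1) m = (r+1) * (B - C) - (x/2 - 1) + (x/2 - 1)^2/(2*(r+1))"
  proof -
    have "1 + (x/2 - 1) / (r+1) = (2*r+x)/(2*r+2)" using r by (simp add: field_simps)
    hence "ln (1 + (x/2 - 1) / (r+1)) = B - C" unfolding B_def C_def using r x by (simp add: ln_div)
    thus ?thesis unfolding lam_def rs by simp
  qed
  have "gt x (2*m+1) + gt x (2*m+2) = H - euler_mascheroni - B + (x - 3/2)/(2*(r+1))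
           - 2 * (lam ((x+1)/2 - 1) m - lam (x/2 - 1) m)"
    unfolding g1 g2 l1 l2 by (rule pair_alg[OF r])
  thus ?thesis unfolding H_def B_def r_def by simp
qed



lemma psum_pairs: "(\<Sum>k<2*N. gt x (Suc k)) = (\<Sum>m<N. gt x (2*m+1) + gt x (2*m+2))"
proof (induction N)
  case 0 then show ?case by simp
next
  case (Suc N)
  have "(\<Sum>k<2*Suc N. gt x (Suc k)) = (\<Sum>k<Suc (Suc (2*N)). gt x (Suc k))" by simp
  also have "\<dots> = (\<Sum>k<2*N. gt x (Suc k)) + gt x (2*N+1) + gt x (2*N+2)"
    by (simp add: add.assoc)
  finally show ?case using Suc by simp
qed

lemma harm_odd_sum: "(\<Sum>m<N. harm (2*m+1) :: real) = (real N + 1/2) * harm (2*N) - real N - harm N / 4"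
proof (induction N)
  case 0 then show ?case by (simp add: harm_def)
next
  case (Suc N)
  define r where "r = real N"
  have r: "r \<ge> 0" unfolding r_def by simp
  have h1: "harm (2*N+1) = harm (2*N) + 1/(2*r+1)"
    using harm_Suc[of "2*N", where 'a=real] unfolding r_def by (simp add: inverse_eq_divide)
  have h2: "harm (2*Suc N) = harm (2*N) + 1/(2*r+1) + 1/(2*r+2)"
  proof -
    have "harm (2*Suc N) = harm (Suc (2*N+1))" by simp
    also have "\<dots> = harm (2*N+1) + 1/(2*r+2)"
      using harm_Suc[of "2*N+1", where 'a=real] unfolding r_def by (simp add: inverse_eq_divide)
    finally show ?thesis using h1 by simp
  qed
  have h3: "harm (Suc N) = harm N + 1/(r+1)"
    using harm_Suc[of N, where 'a=real] unfolding r_def by (simp add: inverse_eq_divide add.commute)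
  have "(\<Sum>m<Suc N. harm (2*m+1) :: real) = (r + 1/2) * harm (2*N) - r - harm N / 4 + harm (2*N+1)"
    using Suc unfolding r_def by simp
  also have "\<dots> = (r + 1 + 1/2) * harm (2*Suc N) - (r + 1) - harm (Suc N) / 4"
  proof -
    have n: "2*r+1 \<noteq> 0" "2*r+2 \<noteq> 0" "r+1 \<noteq> 0" using r by auto
    have "(r + 1 + 1/2) * (1/(2*r+1) + 1/(2*r+2)) - 1 - 1/(4*(r+1)) = 1/(2*r+1)"
    proof -
      have a: "(r + 1 + 1/2) / (2*r+1) = 1/2 + 1/(2*r+1)" using n by (simp add: field_simps)
      have b: "(r + 1 + 1/2) / (2*r+2) = 1/2 + 1/(4*(r+1))" using n by (simp add: field_simps)
      have "(r + 1 + 1/2) * (1/(2*r+1) + 1/(2*r+2)) = (r + 1 + 1/2) / (2*r+1) + (r + 1 + 1/2) / (2*r+2)"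
        by (simp only: distrib_left times_divide_eq_right mult_1_right)
      then show ?thesis using a b by linarith
    qed
    moreover have c: "4/(4+r*4) = 1/(1+r)"
    proof -
      have "4+r*4 \<noteq> 0" "1 + r \<noteq> 0" using r by linarith+
      thus ?thesis by (simp add: field_simps)
    qed
    ultimately show ?thesis unfolding h1 h2 h3 by (simp add: algebra_simps c)
  qed
  finally show ?case unfolding r_def by simp
qed

lemma ln_sum:
  fixes z :: real
  assumes z: "z > 0"
  shows "(\<Sum>m<N. ln (z + real m)) = z * ln (real N) + ln (fact N) - ln (z + real N) - ln_Gamma_series z N"
proof (induction N)
  case 0 then show ?case by (simp add: ln_Gamma_series_def)
next
  case (Suc N)
  define r where "r = real N"
  have r: "r \<ge> 0" unfolding r_def by simp
  have G: "ln_Gamma_series z (Suc N) = ln_Gamma_series z N - z * ln r + z * ln (r+1) - ln (z/(r+1) + 1)"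
    unfolding ln_Gamma_series_def r_def by (simp add: algebra_simps)
  have F: "ln (fact (Suc N) :: real) = ln (r+1) + ln (fact N)"
    unfolding r_def by (simp add: ln_mult add.commute)
  have L: "ln (z/(r+1) + 1) = ln (z + r + 1) - ln (r+1)"
  proof -
    have "z/(r+1) + 1 = (z + r + 1)/(r+1)" using r by (simp add: field_simps)
    thus ?thesis using r z by (simp add: ln_div)
  qed
  have "(\<Sum>m<Suc N. ln (z + real m)) = z * ln r + ln (fact N) - ln (z + r) - ln_Gamma_series z N + ln (z + r)"
    using Suc unfolding r_def by simp
  also have "\<dots> = z * ln (r+1) + ln (fact (Suc N)) - ln (z + (r+1)) - ln_Gamma_series z (Suc N)"
    unfolding G F L by (simp add: algebra_simps)
  finally show ?case unfolding r_def by (simp add: add.commute)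
qed

lemma harm_sum: "(\<Sum>m<N. c / (2 * (real m + 1))) = c / 2 * (harm N :: real)"
proof (induction N)
  case 0 then show ?case by (simp add: harm_def)
next
  case (Suc N)
  have h: "harm (Suc N) = harm N + 1/(real N + 1 :: real)"
    using harm_Suc[of N, where 'a=real] by (simp add: inverse_eq_divide add.commute)
  have "(\<Sum>m<Suc N. c / (2 * (real m + 1))) = c / 2 * harm N + c / (2 * (real N + 1))"
    using Suc by simp
  also have "\<dots> = c / 2 * (harm N + 1/(real N + 1))" by (simp add: distrib_left)
  finally show ?case unfolding h .
qed



lemma gt_tendsto_zero:
  assumes x: "x > 0"
  shows "gt x \<longlonglongrightarrow> 0"
proof -
  define b where "b n = real n * (harm n - ln (real n) - euler_mascheroni) - real n * ln (1 + (x - 1) / real n) + x - 3/2" for n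
  have bl: "b \<longlonglongrightarrow> 1/2 - (x - 1) + x - 3/2"
    unfolding b_def by (intro tendsto_intros harm_asymp n_ln_limit)
  hence b0: "b \<longlonglongrightarrow> 0" by simp
  have eq: "\<bar>gt x n\<bar> = \<bar>b n\<bar>" if n: "n > 0" for n
  proof -
    have rn: "real n > 0" using n by simp
    have "real n \<ge> 1" using n by simp
    hence p: "real n + x - 1 > 0" using x by linarith
    have "real n + x - 1 = real n * (1 + (x - 1) / real n)" using rn by (simp add: field_simps)
    moreover have "1 + (x - 1) / real n > 0" using p rn by (simp add: field_simps)
    ultimately have l: "ln (real n + x - 1) = ln (real n) + ln (1 + (x - 1) / real n)"
      using rn by (simp add: ln_mult)
    have "real n * (harm n - ln (real n + x - 1) - euler_mascheroni + x / real n - 3 / (2 * real n)) = b n"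
      unfolding b_def l using rn by (simp add: field_simps)
    thus ?thesis unfolding gt_def by (simp add: abs_mult mult.assoc)
  qed
  have "(\<lambda>n. \<bar>gt x n\<bar>) \<longlonglongrightarrow> 0"
  proof (rule Lim_transform_eventually)
    show "(\<lambda>n. \<bar>b n\<bar>) \<longlonglongrightarrow> 0" using tendsto_rabs[OF b0] by simp
    show "\<forall>\<^sub>F n in sequentially. \<bar>b n\<bar> = \<bar>gt x n\<bar>"
      using eventually_gt_at_top[of "0::nat"] by eventually_elim (simp add: eq)
  qed
  thus ?thesis by (simp add: tendsto_rabs_zero_iff)
qed



theorem mainTheorem14:
  fixes x :: real
  assumes "x > 0"
  shows "(\<lambda>k. let n = Suc k in (-1) ^ n * real n *
            (harm n - ln (real n + x - 1) - euler_mascheroni + x / real n - 3 / (2 * real n)))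
         sums (euler_mascheroni / 4 - (x - ln 2 - 1) / 2
               - 2 * ln (barnes_G ((x + 1) / 2) / barnes_G (x / 2)) + ln (Gamma (x / 2)))"
proof -
  have x: "x > 0" by fact
  have fe: "(\<lambda>k. let n = Suc k in (-1) ^ n * real n *
            (harm n - ln (real n + x - 1) - euler_mascheroni + x / real n - 3 / (2 * real n)))
         = (\<lambda>k. gt x (Suc k))" unfolding gt_def Let_def ..
  define z where "z = x / 2"
  have z: "z > 0" unfolding z_def using x by simp
  define w2 where "w2 = (x + 1) / 2 - 1"
  define w1 where "w1 = x / 2 - 1"
  define D where "D N = (\<Sum>m<N. lam w2 m - lam w1 m)" for N
  define L where "L = suminf (lam w2) - suminf (lam w1)"
  define S where "S N = (\<Sum>k<2*N. gt x (Suc k))" for N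
  have S1: "S N = (\<Sum>m<N. harm (2*m+1)) - real N * euler_mascheroni
               - (real N * ln 2 + (\<Sum>m<N. ln (z + real m)))
               + (x - 3/2) / 2 * harm N - 2 * D N" for N
  proof -
    have "S N = (\<Sum>m<N. harm (2*m+1) - euler_mascheroni - ln (2*real m + x)
           + (x - 3/2)/(2*(real m+1)) - 2 * (lam w2 m - lam w1 m))"
      unfolding S_def psum_pairs w2_def w1_def using pair_eq[OF x] by simp
    also have "\<dots> = (\<Sum>m<N. harm (2*m+1)) - real N * euler_mascheroni - (\<Sum>m<N. ln (2*real m + x))
           + (\<Sum>m<N. (x - 3/2)/(2*(real m+1))) - 2 * D N"
      unfolding D_def by (simp add: sum.distrib sum_subtractf sum_distrib_left)
    also have "(\<Sum>m<N. ln (2*real m + x)) = (\<Sum>m<N. ln 2 + ln (z + real m))"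
    proof (rule sum.cong)
      fix m assume "m \<in> {..<N}"
      have "2*real m + x = 2 * (z + real m)" unfolding z_def by simp
      moreover have "z + real m > 0" using z by (simp add: add_pos_nonneg)
      ultimately show "ln (2*real m + x) = ln 2 + ln (z + real m)" by (simp only: ln_mult[of 2 "z + real m"]) simp
    qed simp
    also have "\<dots> = real N * ln 2 + (\<Sum>m<N. ln (z + real m))" by (simp add: sum.distrib)
    finally show ?thesis unfolding harm_sum by simp
  qed
  define T where "T N = real N * (harm (2*N) - ln (real (2*N)) - euler_mascheroni)
      + (harm (2*N) - harm N) / 2 - stir N + (ln (z + real N) - ln (real N))
      + (x - 1) / 2 * (harm N - ln (real N)) + ln_Gamma_series z N - 2 * D N" for N
  have ST: "S N = T N" if N: "N > 0" for N
  proof -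
    have rN: "real N > 0" using N by simp
    have l2: "ln (real (2*N)) = ln 2 + ln (real N)" using rN by (simp add: ln_mult)
    show ?thesis unfolding S1 T_def harm_odd_sum ln_sum[OF z] stir_def l2
      by (simp add: z_def field_simps)
  qed
  have DL: "D \<longlonglongrightarrow> L"
  proof -
    have "(\<lambda>N. (\<Sum>m<N. lam w2 m) - (\<Sum>m<N. lam w1 m)) \<longlonglongrightarrow> L"
      unfolding L_def by (intro tendsto_diff summable_LIMSEQ lam_summable)
    thus ?thesis unfolding D_def by (simp add: sum_subtractf)
  qed
  have T4: "(\<lambda>N. ln (z + real N) - ln (real N)) \<longlonglongrightarrow> 0"
  proof (rule Lim_transform_eventually)
    have "(\<lambda>N. ln (1 + z * (1 / real N))) \<longlonglongrightarrow> ln (1 + z * 0)"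
      by (intro tendsto_intros LIMSEQ_inverse_real_of_nat[unfolded inverse_eq_divide]) simp
    thus "(\<lambda>N. ln (1 + z * (1 / real N))) \<longlonglongrightarrow> 0" by simp
    show "\<forall>\<^sub>F N in sequentially. ln (1 + z * (1 / real N)) = ln (z + real N) - ln (real N)"
      using eventually_gt_at_top[of "0::nat"]
    proof eventually_elim
      case (elim N)
      hence rN: "real N > 0" by simp
      have "1 + z * (1 / real N) = (z + real N) / real N" using rN by (simp add: field_simps)
      thus ?case using rN z by (simp add: ln_div)
    qed
  qed
  have GS: "(\<lambda>N. ln_Gamma_series z N) \<longlonglongrightarrow> ln_Gamma z" by (rule ln_Gamma_real_LIMSEQ[OF z])
  have TL: "T \<longlonglongrightarrow> 1/4 + ln 2 / 2 - ln (2*pi) / 2 + 0 + (x - 1) / 2 * euler_mascheroni + ln_Gamma z - 2 * L"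
    unfolding T_def
    by (intro tendsto_intros harm_asymp2 harm_double stir_limit T4 euler_mascheroni_LIMSEQ GS DL) auto
  have SL: "S \<longlonglongrightarrow> 1/4 + ln 2 / 2 - ln (2*pi) / 2 + 0 + (x - 1) / 2 * euler_mascheroni + ln_Gamma z - 2 * L"
  proof (rule Lim_transform_eventually[OF TL])
    show "\<forall>\<^sub>F N in sequentially. T N = S N"
      using eventually_gt_at_top[of "0::nat"] by eventually_elim (simp add: ST)
  qed
  have G2: "barnes_G ((x + 1) / 2) > 0" "ln (barnes_G ((x + 1) / 2)) = ((x + 1) / 2 - 1) / 2 * ln (2*pi)
      - (((x + 1) / 2 - 1) + ((x + 1) / 2 - 1)^2 * (1 + euler_mascheroni)) / 2 + suminf (lam w2)"
    using barnes_G_ln[of "(x + 1) / 2"] x unfolding w2_def by auto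
  have G1: "barnes_G (x / 2) > 0" "ln (barnes_G (x / 2)) = (x / 2 - 1) / 2 * ln (2*pi)
      - ((x / 2 - 1) + (x / 2 - 1)^2 * (1 + euler_mascheroni)) / 2 + suminf (lam w1)"
    using barnes_G_ln[of "x / 2"] x unfolding w1_def by auto
  have val: "1/4 + ln 2 / 2 - ln (2*pi) / 2 + 0 + (x - 1) / 2 * euler_mascheroni + ln_Gamma z - 2 * L
     = euler_mascheroni / 4 - (x - ln 2 - 1) / 2
               - 2 * ln (barnes_G ((x + 1) / 2) / barnes_G (x / 2)) + ln (Gamma (x / 2))"
  proof -
    have "ln (barnes_G ((x + 1) / 2) / barnes_G (x / 2)) = ln (barnes_G ((x + 1) / 2)) - ln (barnes_G (x / 2))"
      using G1(1) G2(1) by (simp add: ln_div)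
    moreover have "ln (Gamma (x / 2)) = ln_Gamma z" unfolding z_def using x by (simp add: ln_Gamma_real_pos)
    ultimately show ?thesis unfolding G1(2) G2(2) L_def
      by (simp add: field_simps power2_eq_square)
  qed
  have "(\<lambda>k. gt x (Suc k)) sums (1/4 + ln 2 / 2 - ln (2*pi) / 2 + 0 + (x - 1) / 2 * euler_mascheroni + ln_Gamma z - 2 * L)"
  proof (rule sums_from_even)
    show "(\<lambda>N. \<Sum>k<2*N. gt x (Suc k)) \<longlonglongrightarrow> 1/4 + ln 2 / 2 - ln (2*pi) / 2 + 0 + (x - 1) / 2 * euler_mascheroni + ln_Gamma z - 2 * L"
      using SL unfolding S_def .
    show "(\<lambda>k. gt x (Suc k)) \<longlonglongrightarrow> 0" by (rule LIMSEQ_Suc[OF gt_tendsto_zero[OF x]])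
  qed
  thus ?thesis unfolding fe val .
qed

end
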